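(* Let $p>1$, let $n>p$ be an integer, let $M$ be a constant with $M>p-1$ and $M>\frac{n(p-1)}{n-p}$, and set $Q=\frac{Mp-p+1}{p-1}$. Put \[ a=\frac{M-p+1}{Mn-pn+n-Mp},\qquad u(r)=\left(\frac{a n-1}{1+a^{\frac{p}{p-1}} M\, r^{\frac{p}{p-1}}}\right)^{\frac{p-1}{M-p+1}} \quad (r\ge 0). \] Then $a>0$, $an>1$, and $u$ is a positive ground state solution of \[ \left(\varphi(u'(r))\right)'+\frac{n-1}{r}\varphi(u'(r))+u^M+u^Q=0 \quad (r>0),\qquad u'(0)=0, \] i.e. $u>0$ on $[0,\infty)$, $u$ satisfies the equation for all $r>0$, $u'(0)=0$, and $u(r)\to 0$ as $r\to\infty$. Moreover $u$ satisfies $\varphi(u'(r))=-a r u^M(r)$ for all $r\ge 0$.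
   Context: Here $\varphi(z)=z|z|^{p-2}$, so that $\left(\varphi(u')\right)'+\frac{n-1}{r}\varphi(u')$ is the radial $p$-Laplacian in $\mathbb{R}^n$. *)

theory Defs
  imports "HOL-Analysis.Analysis"
begin

text \<open>phi(z) = z |z|^(p-2), so that (phi(u'))' + (n-1)/r phi(u') is the radial p-Laplacian.\<close>
definition phi :: "real \<Rightarrow> real \<Rightarrow> real" where
  "phi p z = z * \<bar>z\<bar> powr (p - 2)"

end

theory Submission imports Defs "HOL-Real_Asymp.Real_Asymp" begin

lemma powr_deriv0: assumes "q > 1"
  shows "((\<lambda>r::real. r powr q) has_real_derivative 0) (at 0 within {0..})"
proof -
  have "((\<lambda>y::real. y powr (q-1)) \<longlongrightarrow> 0) (at 0 within {0..})"
    by (rule tendsto_zero_powrI[of _ _ _ "q-1"]) (use assms in \<open>auto intro!: tendsto_eq_intros simp: eventually_at_filter\<close>)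
  moreover have "eventually (\<lambda>y. y powr (q-1) = (y powr q - 0 powr q) / (y - 0)) (at 0 within {0..})"
    unfolding eventually_at_filter by (auto simp: powr_diff)
  ultimately show ?thesis unfolding has_field_derivative_iff
    using tendsto_cong by fastforce
qed

lemma f_deriv: assumes "t > 0" "c > 0"
  shows "((\<lambda>t::real. (c/t) powr \<beta>) has_real_derivative (- \<beta> * (c/t) powr \<beta> / t)) (at t)"
proof (subst DERIV_cong_ev[OF refl _ refl])
  have "eventually (\<lambda>z. z > 0) (nhds t)" using assms eventually_nhds_in_open[of "{0<..}" t] by simp
  then show "eventually (\<lambda>z. (c/z) powr \<beta> = exp (\<beta> * (ln c - ln z))) (nhds t)"
    by eventually_elim (use assms in \<open>simp add: powr_def ln_div\<close>)
  show "((\<lambda>z. exp (\<beta> * (ln c - ln z))) has_real_derivative (- \<beta> * (c/t) powr \<beta> / t)) (at t)"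
    using assms by (auto intro!: derivative_eq_intros simp: powr_def ln_div)
qed

lemma cancel_aux: "y \<noteq> 0 \<Longrightarrow> x/y*M*(y/D) = M*x/(D::real)"
  by (simp add: field_simps)

lemma logalg:
  fixes p M q \<beta> Lb Lq LM La Lr Lw Lc :: real
  assumes "p > 1" "M - p + 1 > 0" "q = p/(p-1)" "\<beta> = (p-1)/(M-p+1)" "Lc = Lb + Lq + LM + La"
  shows "(p-1)*(Lb + (q*La + LM) + Lq + (q-1)*Lr + \<beta>*(Lc - Lw) - Lw) = La + Lr + M*(\<beta>*(Lc-Lw))"
proof -
  have k1: "(p-1)*\<beta> + (p-1) - M*\<beta> = 0" using assms(1,2) unfolding assms(4) by (simp add: field_simps)
  have k2: "(p-1)*q - p = 0" using assms(1) unfolding assms(3) by simp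
  have k3: "(p-1)*(q-1) - 1 = 0" using assms(1) unfolding assms(3) by (simp add: field_simps)
  have "(p-1)*(Lb + (q*La + LM) + Lq + (q-1)*Lr + \<beta>*(Lc - Lw) - Lw) - (La + Lr + M*(\<beta>*(Lc-Lw)))
    = ((p-1)*\<beta> + (p-1) - M*\<beta>) * (Lb + Lq + LM + La - Lw) + ((p-1)*q - p) * La + ((p-1)*(q-1) - 1) * Lr"
    unfolding assms(5) by (simp add: algebra_simps)
  then show ?thesis unfolding k1 k2 k3 by simp
qed

lemma aux1: "x \<noteq> 0 \<Longrightarrow> x/y*(z/x) = z/(y::real)" by simp
lemma aux2: "y \<noteq> 0 \<Longrightarrow> x/y*M + 1 = (x*M + y)/(y::real)" by (simp add: field_simps)

lemma alg:
  fixes W b R r c \<beta> q M a n U UM UMm1 UQ rq1 :: real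
  assumes "W = 1 + b*R" "W > 0" "r > 0" "c = \<beta> * q * M * a" "a*n = c+1"
    "r * rq1 = R" "UMm1 * U = UM" "UQ = UM * c / W"
  shows "-a*UM + (-a*r)*(M*UMm1*(-\<beta>*U/W*(b*(q*rq1)))) + (n-1)/r*(-a*r*UM) + UM + UQ = 0"
proof -
  have "(-a*r)*(M*UMm1*(-\<beta>*U/W*(b*(q*rq1)))) = c * b * UM * (r*rq1) / W"
    using assms(4,7) by (simp add: field_simps)
  also have "\<dots> = c*b*UM*R/W" using assms(6) by simp
  finally have e1: "(-a*r)*(M*UMm1*(-\<beta>*U/W*(b*(q*rq1)))) = c*b*UM*R/W" .
  have e2': "(n-1)/r*(-a*r*UM) = -(a*n)*UM + a*UM" using assms(3) by (simp add: field_simps)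
  have e2: "(n-1)/r*(-a*r*UM) = -(c+1)*UM + a*UM" unfolding e2' assms(5) ..
  have "c*b*UM*R/W + UM*c/W = c*UM*(1+b*R)/W" by (simp add: add_divide_distrib algebra_simps)
  also have "\<dots> = c*UM" using assms(1,2) by simp
  finally have "c*b*UM*R/W + UM*c/W = c*UM" .
  then show ?thesis unfolding e1 e2 assms(8) by (simp add: algebra_simps)
qed

theorem mainTheorem2:
  fixes p M Q a :: real and n :: nat and u :: "real \<Rightarrow> real"
  assumes hp: "p > 1"
    and hn: "real n > p"
    and hM1: "M > p - 1"
    and hM2: "M > real n * (p - 1) / (real n - p)"
    and hQ: "Q = (M * p - p + 1) / (p - 1)"
    and ha: "a = (M - p + 1) / (M * real n - p * real n + real n - M * p)"
    and hu: "u = (\<lambda>r. ((a * real n - 1) /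
                 (1 + a powr (p / (p - 1)) * M * r powr (p / (p - 1))))
                 powr ((p - 1) / (M - p + 1)))"
  shows "a > 0 \<and> a * real n > 1
    \<and> (\<forall>r\<ge>0. u r > 0)
    \<and> (\<forall>r>0. u differentiable (at r)
         \<and> (\<lambda>s. phi p (deriv u s)) differentiable (at r)
         \<and> deriv (\<lambda>s. phi p (deriv u s)) r + (real n - 1) / r * phi p (deriv u r)
             + (u r) powr M + (u r) powr Q = 0)
    \<and> (u has_real_derivative 0) (at 0 within {0..})
    \<and> (u \<longlongrightarrow> 0) at_top
    \<and> (\<forall>r\<ge>0. \<exists>d. (u has_real_derivative d) (at r within {0..})
         \<and> phi p d = - a * r * (u r) powr M)"
proof -
  define q where "q = p/(p-1)"
  define \<beta> where "\<beta> = (p-1)/(M-p+1)"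
  define b where "b = a powr q * M"
  define c where "c = a*real n - 1"
  define w where "w = (\<lambda>r::real. 1 + b * r powr q)"
  define f where "f = (\<lambda>t::real. (c/t) powr \<beta>)"
  have p1: "p - 1 > 0" using hp by simp
  have Mpos: "M > 0" using hM1 hp by simp
  have mp: "M - p + 1 > 0" using hM1 by simp
  have np: "real n - p > 0" using hn by simp
  have Dpos: "M * real n - p * real n + real n - M * p > 0"
  proof -
    have "M * (real n - p) > real n * (p-1)" using hM2 np by (simp add: pos_divide_less_eq)
    then show ?thesis by (simp add: algebra_simps)
  qed
  have apos: "a > 0" using ha mp Dpos by simp
  have an: "a * real n - 1 = M * p / (M * real n - p * real n + real n - M * p)"
    using Dpos by (subst ha) (simp add: field_simps)
  have cpos: "c > 0" unfolding c_def an using Mpos hp Dpos by simp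
  have an1: "a * real n > 1" using cpos c_def by simp
  have q1: "q > 1" unfolding q_def using p1 by (simp add: field_simps)
  have betapos: "\<beta> > 0" unfolding \<beta>_def using p1 mp by simp
  have bpos: "b > 0" unfolding b_def using apos Mpos by simp
  have bq: "\<beta> * q = p / (M - p + 1)" unfolding \<beta>_def q_def using p1 mp by simp
  have ckey: "c = \<beta> * q * M * a"
  proof -
    have "\<beta> * q * M * a = p / (M - p + 1) * M * ((M - p + 1) / (M * real n - p * real n + real n - M * p))"
      unfolding bq by (subst ha) simp
    also have "\<dots> = M * p / (M * real n - p * real n + real n - M * p)" by (rule cancel_aux) (use mp in simp)
    finally show ?thesis unfolding c_def an by simp
  qed
  have u_eq: "u = (\<lambda>r. f (w r))" unfolding hu f_def w_def b_def c_def q_def \<beta>_def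
    by (simp add: mult.assoc)
  have w1: "\<And>r. w r \<ge> 1" unfolding w_def using bpos by simp
  have wpos: "\<And>r. w r > 0" using w1 by (smt (verit))
  have upos: "\<And>r. u r > 0" unfolding u_eq f_def using wpos cpos by (simp add: less_imp_neq[symmetric])
  have fD: "\<And>t. t > 0 \<Longrightarrow> (f has_real_derivative (- \<beta> * f t / t)) (at t)"
    unfolding f_def using f_deriv cpos by blast
  have wD: "\<And>r. r > 0 \<Longrightarrow> (w has_real_derivative b * (q * r powr (q-1))) (at r)"
    unfolding w_def by (auto intro!: derivative_eq_intros)
  have wD0: "(w has_real_derivative 0) (at 0 within {0..})"
    unfolding w_def using DERIV_add[OF DERIV_const DERIV_cmult[OF powr_deriv0[OF q1]], of 1 b] by simp
  define D where "D = (\<lambda>r. - \<beta> * f (w r) / w r * (b * (q * r powr (q-1))))"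
  have uD: "\<And>r. r > 0 \<Longrightarrow> (u has_real_derivative D r) (at r)"
    unfolding u_eq D_def using DERIV_chain2[OF fD[OF wpos] wD] by simp
  have uD0: "(u has_real_derivative 0) (at 0 within {0..})"
    unfolding u_eq using DERIV_chain2[OF fD[OF wpos] wD0] by simp
  have lim: "(u \<longlongrightarrow> 0) at_top"
  proof -
    have "filterlim w at_top at_top" unfolding w_def
      by (rule filterlim_tendsto_add_at_top[OF tendsto_const]
          filterlim_tendsto_pos_mult_at_top[OF tendsto_const bpos real_powr_at_top])+
         (use q1 in simp)
    then have "((\<lambda>r. c / w r) \<longlongrightarrow> 0) at_top"
      by (intro tendsto_divide_0[OF tendsto_const] filterlim_at_top_imp_at_infinity)
    then show ?thesis unfolding u_eq f_def
      by (rule tendsto_zero_powrI[OF _ tendsto_const]) (use cpos wpos betapos in \<open>auto intro!: always_eventually less_imp_le\<close>)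
  qed
  have phiD: "phi p (D r) = - a * r * (u r) powr M" if r: "r > 0" for r
  proof -
    define X where "X = \<beta> * b * q * r powr (q-1) * u r / w r"
    have Xpos: "X > 0" unfolding X_def using betapos bpos q1 r upos wpos by simp
    have DX: "D r = - X" unfolding D_def X_def u_eq by (simp add: field_simps)
    have "phi p (D r) = - (X * X powr (p-2))" unfolding phi_def DX using Xpos by simp
    also have "\<dots> = - (X powr (p-1))" using powr_mult_base[of X "p-2"] Xpos by simp
    also have "X powr (p-1) = a * r * u r powr M"
    proof -
      have lnX: "ln X = ln \<beta> + (q * ln a + ln M) + ln q + (q-1)*ln r + ln (u r) - ln (w r)"
        unfolding X_def b_def using betapos apos Mpos q1 r upos[of r] wpos[of r] by (simp add: ln_mult ln_div ln_powr)
      have lnu: "ln (u r) = \<beta> * (ln c - ln (w r))" unfolding u_eq f_def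
        using cpos wpos[of r] by (simp add: ln_powr ln_div)
      have lnc: "ln c = ln \<beta> + ln q + ln M + ln a" using ckey betapos apos Mpos q1 by (simp add: ln_mult)
      have "(p-1) * ln X = ln a + ln r + M * ln (u r)"
        unfolding lnX lnu by (rule logalg[OF hp mp q_def \<beta>_def lnc])
      moreover have "a * r * u r powr M = exp (ln a + ln r + M * ln (u r))"
        using apos r upos[of r] by (simp add: powr_def exp_add)
      ultimately show ?thesis using Xpos by (simp add: powr_def mult.commute)
    qed
    finally show ?thesis by simp
  qed
  have gD: "((\<lambda>s. - a * s * u s powr M) has_real_derivative
      (-a * u r powr M + (-a*r)*(M * u r powr (M-1) * D r))) (at r)" if r: "r > 0" for r
  proof -
    have h1: "((\<lambda>s. u s powr M) has_real_derivative M * u r powr (M - of_nat 1) * D r) (at r)"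
      by (rule DERIV_fun_powr[OF uD[OF r] upos])
    have h2: "((\<lambda>s. (- a) * s) has_real_derivative (- a)) (at r)" by (auto intro!: derivative_eq_intros)
    show ?thesis by (rule DERIV_cong[OF DERIV_mult[OF h2 h1]]) (simp add: algebra_simps)
  qed
  have derivu: "deriv u s = D s" if "s > 0" for s using DERIV_imp_deriv[OF uD[OF that]] .
  have phiE: "((\<lambda>s. phi p (deriv u s)) has_real_derivative
      (-a * u r powr M + (-a*r)*(M * u r powr (M-1) * D r))) (at r)" if r: "r > 0" for r
    by (rule has_field_derivative_transform_within_open[OF gD[OF r], of "{0<..}"])
       (use r in \<open>auto simp: derivu phiD\<close>)
  have eqn: "deriv (\<lambda>s. phi p (deriv u s)) r + (real n - 1) / r * phi p (deriv u r)
             + (u r) powr M + (u r) powr Q = 0" if r: "r > 0" for r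
  proof -
    have cW: "c / w r > 0" using cpos wpos[of r] by simp
    have ur: "u r = (c / w r) powr \<beta>" unfolding u_eq f_def by simp
    have bQ1: "\<beta> * Q = (M*p-p+1)/(M-p+1)" unfolding \<beta>_def hQ by (rule aux1) (use p1 in simp)
    have bQ2: "\<beta> * M + 1 = ((p-1)*M + (M-p+1))/(M-p+1)" unfolding \<beta>_def by (rule aux2) (use mp in simp)
    have bQ: "\<beta> * Q = \<beta> * M + 1" unfolding bQ1 bQ2 by (simp add: algebra_simps)
    have uQ: "u r powr Q = u r powr M * c / w r"
      unfolding ur powr_powr bQ using cW cpos wpos[of r] by (simp add: powr_add)
    have rr: "r * r powr (q-1) = r powr q" using powr_mult_base[of r "q-1"] r by simp
    have uu: "u r powr (M-1) * u r = u r powr M" using powr_mult_base[of "u r" "M-1"] upos[of r] by (simp add: mult.commute)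
    have Dr: "D r = -\<beta> * u r / w r * (b * (q * r powr (q-1)))" unfolding D_def u_eq by simp
    have an2: "a * real n = c + 1" unfolding c_def by simp
    show ?thesis
      unfolding DERIV_imp_deriv[OF phiE[OF r]] derivu[OF r] phiD[OF r] unfolding Dr
      by (rule alg[OF _ wpos r ckey an2 rr uu uQ]) (simp add: w_def)
  qed
  show ?thesis
  proof (intro conjI allI impI)
    show "a > 0" by (rule apos)
    show "a * real n > 1" by (rule an1)
    show "u r > 0" for r by (rule upos)
    show "u differentiable (at r)" if "r > 0" for r
      using uD[OF that] by (rule has_field_derivative_imp_has_derivative[THEN differentiableI])
    show "(\<lambda>s. phi p (deriv u s)) differentiable (at r)" if "r > 0" for r
      using phiE[OF that] by (rule has_field_derivative_imp_has_derivative[THEN differentiableI])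
    show "deriv (\<lambda>s. phi p (deriv u s)) r + (real n - 1) / r * phi p (deriv u r)
             + (u r) powr M + (u r) powr Q = 0" if "r > 0" for r by (rule eqn[OF that])
    show "(u has_real_derivative 0) (at 0 within {0..})" by (rule uD0)
    show "(u \<longlongrightarrow> 0) at_top" by (rule lim)
    show "\<exists>d. (u has_real_derivative d) (at r within {0..}) \<and> phi p d = - a * r * (u r) powr M"
      if "r \<ge> 0" for r
    proof (cases "r = 0")
      case True
      then show ?thesis using uD0 by (intro exI[of _ 0]) (simp add: phi_def)
    next
      case False
      then have r: "r > 0" using that by simp
      show ?thesis using has_field_derivative_at_within[OF uD[OF r]] phiD[OF r] by blast
    qed
  qed
qed

end
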